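(* For an integer $n\ge1$ and real $1\le x\le n$, define $\widetilde R_A(n,x)$ by $$A(n,x)=\vartheta(x)\,n+\widetilde R_A(n,x),$$ where $A(n,x)=\sum_{p\le x}\frac{2}{p-1}S_p(n)\log p$ (sum over primes). Then for $n^{2/3}\le x\le n$, $$\widetilde R_A(n,x)=O\!\left(x^{5/4}n^{3/4}(\log n)^{7/2}+n^{5/3}(\log n)^2\right).$$
   Context: $\vartheta(x)=\sum_{p\le x}\log p$ is the first Chebyshev function. For a base $b\ge2$, $d_b(m)$ is the sum of the base-$b$ digits of $m\ge0$ and $S_b(n)=\sum_{j=0}^{n-1}d_b(j)$. *)

theory Defs
  imports "HOL-Analysis.Analysis" "HOL-Computational_Algebra.Primes"
begin

definition cheb_theta :: "real \<Rightarrow> real" where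
  "cheb_theta x = (\<Sum>p\<in>{p::nat. prime p \<and> real p \<le> x}. ln (real p))"

function digit_sum :: "nat \<Rightarrow> nat \<Rightarrow> nat" where
  "digit_sum b m = (if b < 2 \<or> m = 0 then 0 else m mod b + digit_sum b (m div b))"
  by auto
termination
  by (relation "Wellfounded.measure (\<lambda>(b,m). m)") auto

definition S_digits :: "nat \<Rightarrow> nat \<Rightarrow> nat" where
  "S_digits b n = (\<Sum>j<n. digit_sum b j)"

definition A_sum :: "nat \<Rightarrow> real \<Rightarrow> real" where
  "A_sum n x = (\<Sum>p\<in>{p::nat. prime p \<and> real p \<le> x}.
      2 / (real p - 1) * real (S_digits p n) * ln (real p))"

definition R_A :: "nat \<Rightarrow> real \<Rightarrow> real" where
  "R_A n x = A_sum n x - cheb_theta x * real n"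

end

theory Submission
  imports Defs
begin


declare digit_sum.simps[simp del]

lemma ds0: "digit_sum p 0 = 0" by (subst digit_sum.simps) simp

lemma ds_rec: "2 \<le> p \<Longrightarrow> digit_sum p j = j mod p + digit_sum p (j div p)"
proof (cases "j = 0")
  case True
  then show ?thesis by (simp add: ds0)
next
  case False
  assume "2 \<le> p"
  then show ?thesis using False by (subst digit_sum.simps) simp
qed

lemma ds_le: "2 \<le> p \<Longrightarrow> digit_sum p j \<le> j"
proof (induction j rule: less_induct)
  case (less j)
  show ?case
  proof (cases "j = 0")
    case True then show ?thesis by (simp add: ds0)
  next
    case False
    then have "j div p < j" using less.prems by simp
    then have "digit_sum p (j div p) \<le> j div p" using less by blast
    moreover have "j mod p + j div p \<le> j"
    proof -
      have "j div p \<le> j div p * p" using less.prems by simp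
      then show ?thesis using div_mult_mod_eq[of j p] by linarith
    qed
    ultimately show ?thesis using ds_rec[OF less.prems, of j] by linarith
  qed
qed

lemma ds_digits: "2 \<le> p \<Longrightarrow> j < p^L \<Longrightarrow> digit_sum p j \<le> (p-1)*L"
proof (induction L arbitrary: j)
  case 0
  then have "j = 0" by simp
  then show ?case by (simp add: ds0)
next
  case (Suc L)
  have "j div p < p^L" using Suc.prems by (simp add: div_less_iff_less_mult mult.commute)
  then have "digit_sum p (j div p) \<le> (p-1)*L" using Suc by blast
  moreover have "j mod p \<le> p - 1" proof -
    have "j mod p < p" using Suc.prems by simp
    then show ?thesis by linarith
  qed
  ultimately show ?case using ds_rec[OF Suc.prems(1), of j] by simp
qed


lemma mod_sum: "2 \<le> (p::nat) \<Longrightarrow> 2 * (\<Sum>j<(n::nat). j mod p) = (n div p)*p*(p-1) + (n mod p)*(n mod p - 1)"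
proof (induction n)
  case 0 then show ?case by simp
next
  case (Suc n)
  obtain k where k: "p = Suc (Suc k)" using Suc.prems by (intro that[of "p - 2"]) simp
  have IH: "2 * (\<Sum>j<Suc n. j mod p) = (n div p)*p*(p-1) + (n mod p)*(n mod p - 1) + 2 * (n mod p)"
  proof -
    have "(\<Sum>j<Suc n. j mod p) = (\<Sum>j<n. j mod p) + n mod p" by (rule sum.lessThan_Suc)
    then show ?thesis using Suc.IH[OF Suc.prems] by linarith
  qed
  show ?case
  proof (cases "Suc (n mod p) = p")
    case True
    then have a: "Suc n mod p = 0" "Suc n div p = Suc (n div p)" "n mod p = Suc k"
      using k True by (simp_all add: mod_Suc div_Suc)
    have "(n div p)*p*(p-1) + (n mod p)*(n mod p - 1) + 2 * (n mod p)
        = (n div p)*p*(p-1) + p*(p-1)"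
    proof -
      have "(n mod p)*(n mod p - 1) + 2 * (n mod p) = Suc k * k + 2 * Suc k" using a(3) by simp
      also have "\<dots> = p * (p - 1)" using k by (simp add: algebra_simps)
      finally show ?thesis by simp
    qed
    also have "\<dots> = (Suc n div p)*p*(p-1) + (Suc n mod p)*(Suc n mod p - 1)"
      unfolding a(1,2) by (simp add: algebra_simps)
    finally show ?thesis using IH by simp
  next
    case False
    then have a: "Suc n mod p = Suc (n mod p)" "Suc n div p = n div p"
      by (simp_all add: mod_Suc div_Suc)
    have "(n mod p)*(n mod p - 1) + 2 * (n mod p) = Suc (n mod p) * (Suc (n mod p) - 1)"
      by (cases "n mod p") (simp_all add: algebra_simps)
    then show ?thesis using IH a by simp
  qed
qed


lemma mod_sum_bounds:
  assumes p: "2 \<le> p"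
  shows "(real p - 1) * (real n - real p) \<le> 2 * real (\<Sum>j<n. j mod p)"
    and "2 * real (\<Sum>j<n. j mod p) \<le> (real p - 1) * real n"
proof -
  define q where "q = n div p"
  define r where "r = n mod p"
  have n: "real n = real q * real p + real r"
  proof -
    have "n = q * p + r" unfolding q_def r_def by simp
    then show ?thesis by (metis of_nat_add of_nat_mult)
  qed
  have "r < p" using p unfolding r_def by simp
  then have "r + 1 \<le> p" by simp
  then have "real (r + 1) \<le> real p" by (rule of_nat_mono)
  then have rp: "real r \<le> real p - 1" by simp
  have r0: "real r \<ge> 0" by simp
  have rr: "real (r * (r - 1)) = real r * (real r - 1)" by (cases r) (simp_all add: algebra_simps)
  have M: "2 * real (\<Sum>j<n. j mod p) = real q * real p * (real p - 1) + real r * (real r - 1)"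
  proof -
    have "2 * (\<Sum>j<n. j mod p) = q*p*(p-1) + r*(r-1)" using mod_sum[OF p] unfolding q_def r_def by simp
    then have "real (2 * (\<Sum>j<n. j mod p)) = real (q*p*(p-1) + r*(r-1))" by simp
    then show ?thesis using p rr by (simp add: of_nat_diff)
  qed
  have diff: "(real p - 1) * real n - 2 * real (\<Sum>j<n. j mod p) = real r * (real p - real r)"
    unfolding M n by (simp add: algebra_simps)
  have "real r * (real p - real r) \<ge> 0" using rp r0 by simp
  then show "2 * real (\<Sum>j<n. j mod p) \<le> (real p - 1) * real n" using diff by linarith
  have "real r * (real p - real r) \<le> (real p - 1) * real p"
    by (rule mult_mono) (use rp r0 in auto)
  then show "(real p - 1) * (real n - real p) \<le> 2 * real (\<Sum>j<n. j mod p)"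
    using diff by (simp add: algebra_simps)
qed

lemma S_split:
  assumes p: "2 \<le> p"
  shows "S_digits p n = (\<Sum>j<n. j mod p) + (\<Sum>j<n. digit_sum p (j div p))"
proof -
  have "(\<Sum>j<n. digit_sum p j) = (\<Sum>j<n. j mod p + digit_sum p (j div p))"
    by (intro sum.cong refl) (rule ds_rec[OF p])
  then show ?thesis unfolding S_digits_def by (simp add: sum.distrib)
qed

lemma div_part:
  assumes p: "2 \<le> p"
  shows "real (\<Sum>j<n. digit_sum p (j div p)) \<le> real n * real n / real p"
proof -
  have "(\<Sum>j<n. digit_sum p (j div p)) \<le> (\<Sum>j<n. n div p)"
  proof (intro sum_mono)
    fix j assume "j \<in> {..<n}"
    then have "j div p \<le> n div p" by (intro div_le_mono) simp
    then show "digit_sum p (j div p) \<le> n div p" using ds_le[OF p, of "j div p"] by linarith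
  qed
  also have "\<dots> = n * (n div p)" by simp
  finally have "real (\<Sum>j<n. digit_sum p (j div p)) \<le> real n * real (n div p)"
    by (metis of_nat_le_iff of_nat_mult)
  also have "\<dots> \<le> real n * (real n / real p)"
    by (intro mult_left_mono) (simp_all add: of_nat_div_le_of_nat)
  finally show ?thesis by simp
qed

lemma digits_part:
  assumes p: "2 \<le> p" and L: "n \<le> p ^ L"
  shows "S_digits p n \<le> n * ((p - 1) * L)"
proof -
  have "S_digits p n \<le> (\<Sum>j<n. (p - 1) * L)"
    unfolding S_digits_def
    by (intro sum_mono ds_digits[OF p]) (use L in auto)
  then show ?thesis by simp
qed



lemma per_p:
  assumes pr: "prime p" and pn: "p \<le> n"
  shows "\<bar>(2 / (real p - 1) * real (S_digits p n) - real n) * ln (real p)\<bar>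
         \<le> real p * ln (real n) + 4 * real n * sqrt (real n) * ln (real n) / real p"
proof -
  have p2: "2 \<le> p" using pr by (simp add: prime_ge_2_nat)
  define P where "P = real p"
  define N where "N = real n"
  define S where "S = real (S_digits p n)"
  define U where "U = 2 / (P - 1) * S"
  have P2: "P \<ge> 2" using p2 unfolding P_def by simp
  have PN: "P \<le> N" using pn unfolding P_def N_def by simp
  have N2: "N \<ge> 2" using P2 PN by simp
  have lnP: "ln P > 0" using P2 by simp
  have lnPN: "ln P \<le> ln N" using PN P2 by simp
  have lnN: "ln N > 0" using N2 by simp
  have Sspl: "S = real (\<Sum>j<n. j mod p) + real (\<Sum>j<n. digit_sum p (j div p))"
    unfolding S_def using S_split[OF p2] by simp
  have b1: "(P - 1) * (N - P) \<le> 2 * real (\<Sum>j<n. j mod p)"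
    and b2: "2 * real (\<Sum>j<n. j mod p) \<le> (P - 1) * N"
    using mod_sum_bounds[OF p2, of n] unfolding P_def N_def by auto
  have b3: "real (\<Sum>j<n. digit_sum p (j div p)) \<le> N * N / P"
    using div_part[OF p2, of n] unfolding P_def N_def by simp
  have b3': "real (\<Sum>j<n. digit_sum p (j div p)) \<ge> 0" by (rule of_nat_0_le_iff)
  have P1: "P - 1 > 0" using P2 by simp
  have lowU: "U \<ge> N - P"
  proof -
    have "(P - 1) * (N - P) \<le> 2 * S" using b1 b3' Sspl by linarith
    then have "N - P \<le> 2 * S / (P - 1)" using P1 by (simp add: field_simps)
    then show ?thesis unfolding U_def by simp
  qed
  have upU1: "U - N \<le> 4 * N * N / (P * P)"
  proof -
    have "2 * S \<le> (P - 1) * N + 2 * (N * N / P)" using b2 b3 Sspl by linarith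
    then have "2 * S / (P - 1) \<le> ((P - 1) * N + 2 * (N * N / P)) / (P - 1)"
      using P1 by (intro divide_right_mono) auto
    also have "\<dots> = N + 2 * (N * N / P) / (P - 1)" using P1 by (simp add: add_divide_distrib)
    finally have "U \<le> N + 2 * (N * N / P) / (P - 1)" unfolding U_def by simp
    moreover have "2 * (N * N / P) / (P - 1) \<le> 4 * N * N / (P * P)"
    proof -
      have "P \<le> 2 * (P - 1)" using P2 by simp
      have "2 * P \<le> P * P" using mult_right_mono[OF P2, of P] P2 by simp
      then have w: "P * P / 2 \<le> P * (P - 1)" by (simp add: right_diff_distrib)
      have e1: "2 * (N * N / P) / (P - 1) = (2 * N * N) / (P * (P - 1))" by simp
      have e2: "4 * N * N / (P * P) = (2 * N * N) / (P * P / 2)" by simp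
      show ?thesis unfolding e1 e2
        by (rule frac_le) (use w P2 in auto)
    qed
    ultimately show ?thesis by linarith
  qed
  define L where "L = nat \<lceil>ln N / ln P\<rceil>"
  have Lreal: "real L = real_of_int \<lceil>ln N / ln P\<rceil>"
    unfolding L_def using lnN lnP by (simp add: divide_nonneg_nonneg)
  have L1: "ln N \<le> real L * ln P"
  proof -
    have "ln N / ln P \<le> real L" unfolding Lreal by linarith
    then show ?thesis using lnP by (simp add: field_simps)
  qed
  have L2: "real L * ln P \<le> ln N + ln P"
  proof -
    have "real L \<le> ln N / ln P + 1" unfolding Lreal by linarith
    then have "real L * ln P \<le> (ln N / ln P + 1) * ln P" using lnP by (intro mult_right_mono) auto
    moreover have "(ln N / ln P + 1) * ln P = ln N + ln P" using lnP by (simp add: distrib_right)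
    ultimately show ?thesis by simp
  qed
  have npL: "n \<le> p ^ L"
  proof -
    have "ln N \<le> ln (P ^ L)" using L1 P2 by (simp add: ln_realpow)
    then have "N \<le> P ^ L" using N2 P2 by simp
    then have "real n \<le> real (p ^ L)" unfolding N_def P_def by simp
    then show ?thesis by (simp only: of_nat_le_iff)
  qed
  have upU2: "U * ln P \<le> 4 * N * ln N"
  proof -
    have "S_digits p n \<le> n * ((p - 1) * L)" by (rule digits_part[OF p2 npL])
    then have "S \<le> N * ((P - 1) * real L)"
    proof -
      have "real (S_digits p n) \<le> real (n * ((p - 1) * L))" by (rule of_nat_mono) fact
      also have "\<dots> = real n * ((real p - 1) * real L)" using p2 by (simp add: of_nat_diff)
      finally show ?thesis unfolding S_def N_def P_def .
    qed
    then have "U \<le> 2 * N * real L" unfolding U_def using P1 by (simp add: field_simps)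
    then have "U * ln P \<le> 2 * N * real L * ln P" using lnP by (intro mult_right_mono) auto
    also have "\<dots> = 2 * N * (real L * ln P)" by simp
    also have "\<dots> \<le> 2 * N * (ln N + ln P)" using L2 N2 by (intro mult_left_mono) auto
    also have "\<dots> \<le> 4 * N * ln N" using lnPN N2 by (simp add: algebra_simps)
    finally show ?thesis .
  qed
  define T where "T = 4 * N * sqrt N * ln N / P"
  have sqN: "sqrt N * sqrt N = N" using N2 by simp
  have sq0: "sqrt N > 0" using N2 by simp
  have upper: "(U - N) * ln P \<le> T"
  proof (cases "P * P \<le> N")
    case True
    then have "sqrt (P * P) \<le> sqrt N" by (rule real_sqrt_le_mono)
    moreover have "sqrt (P * P) = P" using P2 by simp
    ultimately have "P \<le> sqrt N" by simp
    have "(U - N) * ln P \<le> U * ln P" using lnP N2 by (simp add: algebra_simps)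
    also have "\<dots> \<le> 4 * N * ln N" by (rule upU2)
    also have "\<dots> \<le> T"
    proof -
      have "4 * N * ln N * P \<le> 4 * N * ln N * sqrt N"
        using \<open>P \<le> sqrt N\<close> lnN N2 by (intro mult_left_mono) auto
      then show ?thesis unfolding T_def using P2 by (simp add: field_simps)
    qed
    finally show ?thesis .
  next
    case False
    then have "sqrt N < sqrt (P * P)" by (intro real_sqrt_less_mono) simp
    moreover have "sqrt (P * P) = P" using P2 by simp
    ultimately have "sqrt N < P" by simp
    have "4 * N * N / (P * P) \<le> 4 * N * sqrt N / P"
    proof -
      have "sqrt N * sqrt N \<le> sqrt N * P" using \<open>sqrt N < P\<close> sq0
        by (intro mult_left_mono) auto
      then have "N \<le> sqrt N * P" using sqN by simp
      then have NP: "N / P \<le> sqrt N" using P2 by (simp add: pos_divide_le_eq mult.commute)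
      have "4 * N * N / (P * P) = (4 * N / P) * (N / P)" by simp
      also have "\<dots> \<le> (4 * N / P) * sqrt N" by (rule mult_left_mono[OF NP]) (use N2 P2 in simp)
      also have "\<dots> = 4 * N * sqrt N / P" by simp
      finally show ?thesis .
    qed
    then have D1: "U - N \<le> 4 * N * sqrt N / P" using upU1 by linarith
    show ?thesis
    proof (cases "U - N \<ge> 0")
      case True
      have "(U - N) * ln P \<le> (4 * N * sqrt N / P) * ln N"
        using D1 True lnPN lnP by (intro mult_mono) auto
      then show ?thesis unfolding T_def by simp
    next
      case False
      then have "(U - N) * ln P \<le> 0" using lnP by (simp add: mult_nonpos_nonneg)
      moreover have "T \<ge> 0" unfolding T_def using N2 P2 lnN by simp
      ultimately show ?thesis by linarith
    qed
  qed
  have lower: "(U - N) * ln P \<ge> - (P * ln N)"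
  proof -
    have "(U - N) * ln P \<ge> (- P) * ln P" using lowU lnP by (intro mult_right_mono) auto
    moreover have "P * ln P \<le> P * ln N" using lnPN P2 by (intro mult_left_mono) auto
    ultimately show ?thesis by simp
  qed
  have "T \<ge> 0" unfolding T_def using N2 P2 lnN by simp
  then have "\<bar>(U - N) * ln P\<bar> \<le> P * ln N + T" using upper lower mult_nonneg_nonneg[of P "ln N"] P2 lnN unfolding abs_le_iff by linarith
  then show ?thesis unfolding U_def T_def P_def N_def S_def by simp
qed



lemma R_A_sum:
  "R_A n x = (\<Sum>p\<in>{p::nat. prime p \<and> real p \<le> x}.
      (2 / (real p - 1) * real (S_digits p n) - real n) * ln (real p))"
  unfolding R_A_def A_sum_def cheb_theta_def sum_distrib_right sum_subtractf[symmetric]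
  by (intro sum.cong refl) (simp add: algebra_simps)

lemma harm_bound: "1 \<le> m \<Longrightarrow> (harm m :: real) \<le> ln (real m) + 1"
  using euler_mascheroni_sequence_decreasing[of 1 m] by (simp add: harm_def)

lemma main_bound:
  assumes n1: "1 \<le> n" and x1: "1 \<le> x" and xn: "x \<le> real n"
  shows "\<bar>R_A n x\<bar> \<le> x * x * ln (real n) + 4 * real n * sqrt (real n) * ln (real n) * (ln (real n) + 1)"
proof -
  define P where "P = {p::nat. prime p \<and> real p \<le> x}"
  define M where "M = nat \<lfloor>x\<rfloor>"
  have M1: "1 \<le> M" unfolding M_def using x1 by linarith
  have Mx: "real M \<le> x" unfolding M_def using x1 by linarith
  have Mn: "M \<le> n" using Mx xn by linarith
  have PM: "P \<subseteq> {1..M}"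
  proof
    fix p assume "p \<in> P"
    then have "prime p" "real p \<le> x" unfolding P_def by auto
    then have "p \<ge> 1" "p \<le> M" unfolding M_def using prime_ge_1_nat[of p] by (auto, linarith)
    then show "p \<in> {1..M}" by simp
  qed
  have finP: "finite P" using PM finite_subset by blast
  have ln0: "ln (real n) \<ge> 0" using n1 by simp
  have "\<bar>R_A n x\<bar> \<le> (\<Sum>p\<in>P. \<bar>(2 / (real p - 1) * real (S_digits p n) - real n) * ln (real p)\<bar>)"
    unfolding R_A_sum P_def[symmetric] by (rule sum_abs)
  also have "\<dots> \<le> (\<Sum>p\<in>P. real p * ln (real n) + 4 * real n * sqrt (real n) * ln (real n) / real p)"
  proof (intro sum_mono per_p)
    fix p assume "p \<in> P"
    then show "prime p" unfolding P_def by auto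
    from \<open>p \<in> P\<close> have "real p \<le> real n" unfolding P_def using xn by auto
    then show "p \<le> n" by simp
  qed
  also have "\<dots> = (\<Sum>p\<in>P. real p * ln (real n)) + 4 * real n * sqrt (real n) * ln (real n) * (\<Sum>p\<in>P. 1 / real p)"
    by (simp add: sum.distrib sum_distrib_left)
  also have "\<dots> \<le> x * x * ln (real n) + 4 * real n * sqrt (real n) * ln (real n) * (ln (real n) + 1)"
  proof (rule add_mono)
    have "(\<Sum>p\<in>P. real p * ln (real n)) \<le> (\<Sum>p\<in>P. x * ln (real n))"
      by (intro sum_mono mult_right_mono) (use ln0 P_def in auto)
    also have "\<dots> = real (card P) * (x * ln (real n))" by simp
    also have "\<dots> \<le> x * (x * ln (real n))"
    proof (rule mult_right_mono)
      have "card P \<le> card {1..M}" by (rule card_mono) (use PM in auto)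
      then have "real (card P) \<le> real M" by simp
      then show "real (card P) \<le> x" using Mx by linarith
      show "0 \<le> x * ln (real n)" using ln0 x1 by simp
    qed
    finally show "(\<Sum>p\<in>P. real p * ln (real n)) \<le> x * x * ln (real n)" by simp
    have "(\<Sum>p\<in>P. 1 / real p) \<le> (\<Sum>k\<in>{1..M}. 1 / real k)"
      by (rule sum_mono2) (use PM in auto)
    also have "\<dots> = harm M" by (simp add: harm_def divide_inverse)
    also have "\<dots> \<le> ln (real M) + 1" by (rule harm_bound[OF M1])
    also have "\<dots> \<le> ln (real n) + 1" using M1 Mn by simp
    finally have "(\<Sum>p\<in>P. 1 / real p) \<le> ln (real n) + 1" .
    then show "4 * real n * sqrt (real n) * ln (real n) * (\<Sum>p\<in>P. 1 / real p)
        \<le> 4 * real n * sqrt (real n) * ln (real n) * (ln (real n) + 1)"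
      by (rule mult_left_mono) (use ln0 in simp)
  qed
  finally show ?thesis .
qed



lemma final_ineq:
  assumes n2: "2 \<le> n" and xlo: "1 \<le> x" and xn: "x \<le> real n"
  shows "x * x * ln (real n) + 4 * real n * sqrt (real n) * ln (real n) * (ln (real n) + 1)
    \<le> 12 * (x powr (5/4) * real n powr (3/4) * ln (real n) powr (7/2)
                        + real n powr (5/3) * ln (real n) powr 2)"
proof -
  define l where "l = ln (real n)"
  define N where "N = real n"
  have N2: "N \<ge> 2" unfolding N_def using n2 by simp
  have l23: "l \<ge> 2/3"
  proof -
    have "ln 2 \<le> l" unfolding l_def using n2 by simp
    then show ?thesis using ln2_ge_two_thirds by linarith
  qed
  have l0: "l > 0" using l23 by simp
  have l52: "l powr (5/2) \<ge> 1/8"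
  proof (cases "l \<ge> 1")
    case True
    have "1 powr (5/2) \<le> l powr (5/2)" by (rule powr_mono2) (use True in auto)
    then show ?thesis by simp
  next
    case False
    have "l powr 3 \<le> l powr (5/2)" by (rule powr_mono') (use False l0 in auto)
    moreover have "l powr 3 = l ^ 3" using l0 by simp
    moreover have "(2/3) ^ 3 \<le> l ^ 3" by (rule power_mono) (use l23 in auto)
    ultimately show ?thesis by (simp add: power3_eq_cube)
  qed
  have l72: "l powr (7/2) = l * l powr (5/2)"
  proof -
    have "l powr (7/2) = l powr (1 + 5/2)" by simp
    also have "\<dots> = l * l powr (5/2)" unfolding powr_add using l0 by simp
    finally show ?thesis .
  qed
  have t1: "l \<le> 8 * l powr (7/2)"
  proof -
    have "l * (1/8) \<le> l * l powr (5/2)" by (rule mult_left_mono) (use l52 l0 in auto)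
    then show ?thesis unfolding l72 by simp
  qed
  have xx: "x * x \<le> x powr (5/4) * N powr (3/4)"
  proof -
    have "x * x = x powr (5/4 + 3/4)" using xlo by (simp add: powr_numeral[symmetric] power2_eq_square)
    also have "\<dots> = x powr (5/4) * x powr (3/4)" by (rule powr_add)
    also have "\<dots> \<le> x powr (5/4) * N powr (3/4)"
      by (intro mult_left_mono powr_mono2) (use xlo xn N_def in auto)
    finally show ?thesis .
  qed
  have A: "x * x * l \<le> 8 * (x powr (5/4) * N powr (3/4) * l powr (7/2))"
  proof -
    have "x * x * l \<le> (x powr (5/4) * N powr (3/4)) * (8 * l powr (7/2))"
      by (rule mult_mono[OF xx t1]) (use l0 in auto)
    then show ?thesis by (simp add: algebra_simps)
  qed
  have Nsq: "N * sqrt N \<le> N powr (5/3)"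
  proof -
    have "N * sqrt N = N powr 1 * N powr (1/2)" using N2 by (simp add: powr_half_sqrt)
    also have "\<dots> = N powr (1 + 1/2)" by (rule powr_add[symmetric])
    also have "\<dots> \<le> N powr (5/3)" by (rule powr_mono) (use N2 in auto)
    finally show ?thesis .
  qed
  have ll: "l * (l + 1) \<le> 3 * l powr 2"
  proof -
    have "l + 1 \<le> 3 * l" using l23 by simp
    then have "l * (l + 1) \<le> l * (3 * l)" using l0 by (intro mult_left_mono) auto
    then show ?thesis using l0 by (simp add: power2_eq_square)
  qed
  have B: "4 * N * sqrt N * l * (l + 1) \<le> 12 * (N powr (5/3) * l powr 2)"
  proof -
    have "4 * N * sqrt N * l * (l + 1) = 4 * (N * sqrt N) * (l * (l + 1))" by (simp add: algebra_simps)
    also have "\<dots> \<le> 4 * N powr (5/3) * (3 * l powr 2)"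
      by (intro mult_mono mult_left_mono Nsq ll) (use N2 l0 in auto)
    finally show ?thesis by simp
  qed
  have C0: "0 \<le> x powr (5/4) * N powr (3/4) * l powr (7/2)" by simp
  have "x * x * l + 4 * N * sqrt N * l * (l + 1)
     \<le> 8 * (x powr (5/4) * N powr (3/4) * l powr (7/2)) + 12 * (N powr (5/3) * l powr 2)"
    by (rule add_mono[OF A B])
  also have "\<dots> \<le> 12 * (x powr (5/4) * N powr (3/4) * l powr (7/2)) + 12 * (N powr (5/3) * l powr 2)"
    using C0 by simp
  also have "\<dots> = 12 * (x powr (5/4) * N powr (3/4) * l powr (7/2) + N powr (5/3) * l powr 2)"
    by (simp add: distrib_left)
  finally show ?thesis unfolding l_def N_def by simp
qed

theorem theoremA2:
  "\<exists>C>0. \<forall>n::nat. \<forall>x::real. n \<ge> 1 \<longrightarrow> real n powr (2/3) \<le> x \<longrightarrow> x \<le> real n \<longrightarrow>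
     \<bar>R_A n x\<bar> \<le> C * (x powr (5/4) * real n powr (3/4) * ln (real n) powr (7/2)
                        + real n powr (5/3) * ln (real n) powr 2)"
proof (intro exI[of _ 12] conjI allI impI)
  fix n :: nat and x :: real
  assume n1: "n \<ge> 1" and xlo: "real n powr (2/3) \<le> x" and xn: "x \<le> real n"
  have "1 \<le> real n powr (2/3)" using n1 by (intro ge_one_powr_ge_zero) auto
  then have x1: "1 \<le> x" using xlo by linarith
  have mb: "\<bar>R_A n x\<bar> \<le> x * x * ln (real n) + 4 * real n * sqrt (real n) * ln (real n) * (ln (real n) + 1)"
    by (rule main_bound[OF n1 x1 xn])
  show "\<bar>R_A n x\<bar> \<le> 12 * (x powr (5/4) * real n powr (3/4) * ln (real n) powr (7/2)
                        + real n powr (5/3) * ln (real n) powr 2)"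
  proof (cases "n = 1")
    case True
    then show ?thesis using mb by simp
  next
    case False
    then have "2 \<le> n" using n1 by simp
    from final_ineq[OF this x1 xn] mb show ?thesis by linarith
  qed
qed simp


end
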